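(* Let $S$ be a bottomed linearly ordered set with $\omega_0\le\chi(S)$. Define $I\colon S\to\mathbb{H}(S)$ by $I(s)=e_{\mathcal{H}((S^* )^{\mathrm{op}}),\,W_S(s)}$ if $\perp_S<s$ and $I(\perp_S)=0$. Then $I$ is an isotone embedding (injective and order preserving) whose image is a g-characteristic subset of the linearly ordered Abelian group $\mathbb{H}(S)$, i.e. $0$ lies in the image and for every $f\in\mathbb{H}(S)$ with $f>0$ there exists $s\in S^*$ with $0<I(s)<f$.
   Context: A bottomed linearly ordered set $S$ has a least element $\perp_S$; $S^*=S\setminus\{\perp_S\}$. The character $\chi(S)$ is the least cardinal $\kappa>0$ such that some strictly decreasing family $(s_\alpha)_{\alpha<\kappa}$ in $S^*$ has every $t\in S^*$ bounded below by some $s_\alpha$. For a linearly ordered set $L$, $L^{\mathrm{op}}$ is $L$ with the reversed order. A subset of $L$ is dually well-ordered if each of its non-empty subsets has a maximum. The Hahn group $\mathcal{H}(L)$ is the set of maps $f\colon L\to\mathbb{R}$ whose support $\{x:f(x)\ne0\}$ is dually well-ordered, with pointwise addition and order $f<g$ iff $f\neq g$ and $f(\theta)<g(\theta)$ where $\theta=\max\{x:f(x)\ne g(x)\}$; it is a linearly ordered Abelian group. For $s\in L$, $e_{L,s}\in\mathcal{H}(L)$ is the function with $e_{L,s}(s)=1$ and $e_{L,s}(x)=0$ for $x\ne s$. For a linearly ordered Abelian group $G$, the Hahn field $\mathcal{H}(G)$ is the Hahn group with the product $(fg)(x)=\sum_{a+b=x}f(a)g(b)$. Define $\mathbb{H}(S)$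 to be the Hahn field of the linearly ordered Abelian group $\mathcal{H}((S^* )^{\mathrm{op}})$, and $W_S\colon S^*\to\mathcal{H}((S^* )^{\mathrm{op}})$ by $W_S(s)=-e_{(S^* )^{\mathrm{op}},s}$. *)

theory Defs
  imports Main HOL.Real
begin

definition dually_wo :: "('b \<Rightarrow> 'b \<Rightarrow> bool) \<Rightarrow> 'b set \<Rightarrow> bool" where
  "dually_wo le A \<longleftrightarrow> (\<forall>B\<subseteq>A. B \<noteq> {} \<longrightarrow> (\<exists>m\<in>B. \<forall>x\<in>B. le x m))"

text \<open>Hahn group of the linearly ordered set (L, le): real-valued maps on L
(represented as maps vanishing outside L) with dually well-ordered support.\<close>
definition hahn :: "'b set \<Rightarrow> ('b \<Rightarrow> 'b \<Rightarrow> bool) \<Rightarrow> ('b \<Rightarrow> real) set" where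
  "hahn L le = {f. (\<forall>x. x \<notin> L \<longrightarrow> f x = 0) \<and> dually_wo le {x. f x \<noteq> 0}}"

definition hahn_less :: "('b \<Rightarrow> 'b \<Rightarrow> bool) \<Rightarrow> ('b \<Rightarrow> real) \<Rightarrow> ('b \<Rightarrow> real) \<Rightarrow> bool" where
  "hahn_less le f g \<longleftrightarrow> f \<noteq> g \<and>
     (\<exists>\<theta>. f \<theta> \<noteq> g \<theta> \<and> (\<forall>x. f x \<noteq> g x \<longrightarrow> le x \<theta>) \<and> f \<theta> < g \<theta>)"

definition hahn_le :: "('b \<Rightarrow> 'b \<Rightarrow> bool) \<Rightarrow> ('b \<Rightarrow> real) \<Rightarrow> ('b \<Rightarrow> real) \<Rightarrow> bool" where
  "hahn_le le f g \<longleftrightarrow> f = g \<or> hahn_less le f g"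

definition unit_at :: "'b \<Rightarrow> ('b \<Rightarrow> real)" where
  "unit_at s = (\<lambda>x. if x = s then 1 else 0)"

text \<open>A bottomed linearly ordered set is modelled as a type of class
linorder + order_bot; S* = S minus bottom.\<close>
definition Sstar :: "'a::{linorder,order_bot} set" where
  "Sstar = {s. bot < s}"

definition op_le :: "'a::linorder \<Rightarrow> 'a \<Rightarrow> bool" where
  "op_le x y \<longleftrightarrow> y \<le> x"

definition GS :: "('a::{linorder,order_bot} \<Rightarrow> real) set" where
  "GS = hahn Sstar op_le"

definition GS_le :: "('a::{linorder,order_bot} \<Rightarrow> real) \<Rightarrow> ('a \<Rightarrow> real) \<Rightarrow> bool" where
  "GS_le = hahn_le op_le"

text \<open>The Hahn field H(S) = H(G) (as an ordered set; only the order and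
additive structure are relevant for the statement).\<close>
definition HS :: "(('a::{linorder,order_bot} \<Rightarrow> real) \<Rightarrow> real) set" where
  "HS = hahn GS GS_le"

definition HS_less :: "(('a::{linorder,order_bot} \<Rightarrow> real) \<Rightarrow> real) \<Rightarrow> (('a \<Rightarrow> real) \<Rightarrow> real) \<Rightarrow> bool" where
  "HS_less = hahn_less GS_le"

definition W_S :: "'a::{linorder,order_bot} \<Rightarrow> ('a \<Rightarrow> real)" where
  "W_S s = (\<lambda>x. - unit_at s x)"

definition I_S :: "'a::{linorder,order_bot} \<Rightarrow> (('a \<Rightarrow> real) \<Rightarrow> real)" where
  "I_S s = (if bot < s then unit_at (W_S s) else (\<lambda>_. 0))"

definition coinitial_dec_family :: "nat \<Rightarrow> (nat \<Rightarrow> 'a::{linorder,order_bot}) \<Rightarrow> bool" where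
  "coinitial_dec_family n x \<longleftrightarrow>
     (\<forall>i<n. x i \<in> Sstar) \<and> (\<forall>i j. i < j \<and> j < n \<longrightarrow> x j < x i) \<and>
     (\<forall>t\<in>Sstar. \<exists>i<n. x i \<le> t)"

text \<open>omega_0 \<le> chi(S): chi(S) is defined (S* nonempty) and is not a
finite (positive) cardinal.\<close>
definition char_ge_omega :: "'a::{linorder,order_bot} itself \<Rightarrow> bool" where
  "char_ge_omega _ \<longleftrightarrow> (Sstar :: 'a set) \<noteq> {} \<and>
     \<not> (\<exists>n>0. \<exists>x::nat \<Rightarrow> 'a. coinitial_dec_family n x)"

end

theory Submission
  imports Defs
begin

lemma no_min:
  assumes "char_ge_omega TYPE('a::{linorder,order_bot})" "(m::'a) \<in> Sstar"
  shows "\<exists>s\<in>Sstar. s < m"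
proof (rule ccontr)
  assume "\<not> ?thesis"
  hence "\<forall>t\<in>Sstar. m \<le> t" by (auto simp: not_less)
  hence "coinitial_dec_family 1 (\<lambda>_. m)" using assms(2) by (auto simp: coinitial_dec_family_def)
  thus False using assms(1) by (auto simp: char_ge_omega_def)
qed

lemma WS_less:
  assumes "(s::'a::{linorder,order_bot}) < t"
  shows "hahn_less op_le (W_S s) (W_S t)"
  unfolding hahn_less_def
proof (intro conjI exI[of _ s])
  have "s \<noteq> t" using assms by simp
  then show a: "W_S s s \<noteq> W_S t s" "W_S s s < W_S t s" by (simp_all add: W_S_def unit_at_def)
  then show "W_S s \<noteq> W_S t" by metis
  show "\<forall>x. W_S s x \<noteq> W_S t x \<longrightarrow> op_le x s"
    using assms by (auto simp: W_S_def unit_at_def op_le_def split: if_splits)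
qed

lemma below_GS:
  assumes "char_ge_omega TYPE('a::{linorder,order_bot})" "(th::'a \<Rightarrow> real) \<in> GS"
  shows "\<exists>s\<in>Sstar. hahn_less op_le (W_S s) th"
proof -
  have ne: "(Sstar::'a set) \<noteq> {}" using assms(1) by (simp add: char_ge_omega_def)
  have out: "\<forall>x. x \<notin> Sstar \<longrightarrow> th x = 0" and dw: "dually_wo op_le {x. th x \<noteq> 0}"
    using assms(2) by (auto simp: GS_def hahn_def)
  obtain s where s: "s \<in> Sstar" "\<forall>x. th x \<noteq> 0 \<longrightarrow> s < x"
  proof (cases "{x. th x \<noteq> 0} = {}")
    case True
    then show ?thesis using ne that by auto
  next
    case False
    have "\<exists>m\<in>{x. th x \<noteq> 0}. \<forall>x\<in>{x. th x \<noteq> 0}. op_le x m"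
      using dw False unfolding dually_wo_def by (metis order_refl)
    then obtain m where m: "th m \<noteq> 0" "\<forall>x. th x \<noteq> 0 \<longrightarrow> m \<le> x"
      unfolding op_le_def by auto
    have "m \<in> Sstar" using m out by blast
    then obtain s where "s \<in> Sstar" "s < m" using no_min[OF assms(1)] by blast
    then show ?thesis using that m(2) by (meson less_le_trans)
  qed
  have ts: "th s = 0" using s by blast
  have "hahn_less op_le (W_S s) th"
    unfolding hahn_less_def
  proof (intro conjI exI[of _ s])
    show a: "W_S s s \<noteq> th s" using ts by (simp add: W_S_def unit_at_def)
    then show "W_S s \<noteq> th" by (intro notI) simp
    show "W_S s s < th s" using ts by (simp add: W_S_def unit_at_def)
    show "\<forall>x. W_S s x \<noteq> th x \<longrightarrow> op_le x s"
      using s by (auto simp: W_S_def unit_at_def op_le_def less_imp_le)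
  qed
  thus ?thesis using s by blast
qed

lemma dwo_single: "le a a \<Longrightarrow> dually_wo le {a}"
  unfolding dually_wo_def by (auto simp: subset_singleton_iff)

lemma I_pos:
  assumes "bot < (t::'a::{linorder,order_bot})"
  shows "HS_less (\<lambda>_. 0) (I_S t)"
  unfolding HS_less_def hahn_less_def
proof (intro conjI exI[of _ "W_S t"])
  show "0 \<noteq> I_S t (W_S t)" "0 < I_S t (W_S t)" using assms by (auto simp: I_S_def unit_at_def)
  then show "(\<lambda>_. 0) \<noteq> I_S t"
  proof (intro notI)
    assume "(\<lambda>_. 0) = I_S t"
    then have "0 = I_S t (W_S t)" by (rule fun_cong)
    then show False using \<open>0 < I_S t (W_S t)\<close> by simp
  qed
  show "\<forall>x. 0 \<noteq> I_S t x \<longrightarrow> GS_le x (W_S t)"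
    using assms by (auto simp: I_S_def unit_at_def GS_le_def hahn_le_def)
qed

theorem proposition2p24:
  assumes "char_ge_omega TYPE('a::{linorder,order_bot})"
  shows "(\<forall>s::'a. I_S s \<in> HS)
    \<and> inj (I_S :: 'a \<Rightarrow> _)
    \<and> (\<forall>s t::'a. s < t \<longrightarrow> HS_less (I_S s) (I_S t))
    \<and> (\<lambda>_. 0) \<in> range (I_S :: 'a \<Rightarrow> _)
    \<and> (\<forall>f\<in>(HS :: (('a \<Rightarrow> real) \<Rightarrow> real) set). HS_less (\<lambda>_. 0) f \<longrightarrow>
         (\<exists>s\<in>(Sstar :: 'a set). HS_less (\<lambda>_. 0) (I_S s) \<and> HS_less (I_S s) f))"
proof (intro conjI)
  show "\<forall>s::'a. I_S s \<in> HS"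
  proof
    fix s :: 'a
    show "I_S s \<in> HS"
    proof (cases "bot < s")
      case True
      have sup1: "{x. W_S s x \<noteq> 0} = {s}" by (auto simp: W_S_def unit_at_def)
      have "W_S s \<in> GS"
        unfolding GS_def hahn_def mem_Collect_eq sup1
      proof (intro conjI allI impI)
        fix x :: 'a assume "x \<notin> Sstar"
        then have "x \<noteq> s" using True by (auto simp: Sstar_def)
        then show "W_S s x = 0" by (simp add: W_S_def unit_at_def)
      next
        show "dually_wo op_le {s}" by (rule dwo_single) (simp add: op_le_def)
      qed
      moreover have "{x. unit_at (W_S s) x \<noteq> 0} = {W_S s}" by (auto simp: unit_at_def)
      ultimately show ?thesis using True
        unfolding HS_def hahn_def mem_Collect_eq I_S_def
        by (simp add: unit_at_def dwo_single GS_le_def hahn_le_def)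
    next
      case False
      then show ?thesis unfolding HS_def hahn_def I_S_def by (simp add: dually_wo_def)
    qed
  qed
next
  have W_inj: "W_S s = W_S t \<Longrightarrow> s = t" for s t :: 'a
    by (drule fun_cong[of _ _ s]) (auto simp: W_S_def unit_at_def split: if_splits)
  show "inj (I_S :: 'a \<Rightarrow> _)"
  proof (rule injI)
    fix s t :: 'a assume eq: "I_S s = I_S t"
    show "s = t"
    proof (cases "bot < s"; cases "bot < t")
      assume "bot < s" "bot < t"
      then show ?thesis using eq W_inj
        by (auto simp: I_S_def unit_at_def dest!: fun_cong[of _ _ "W_S s"] split: if_splits)
    next
      assume "bot < s" "\<not> bot < t"
      then show ?thesis using eq by (auto simp: I_S_def unit_at_def dest!: fun_cong[of _ _ "W_S s"])
    next
      assume "\<not> bot < s" "bot < t"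
      then show ?thesis using eq by (auto simp: I_S_def unit_at_def dest!: fun_cong[of _ _ "W_S t"])
    next
      assume "\<not> bot < s" "\<not> bot < t"
      then show ?thesis by (metis bot.not_eq_extremum)
    qed
  qed
next
  show "\<forall>s t::'a. s < t \<longrightarrow> HS_less (I_S s) (I_S t)"
  proof (intro allI impI)
    fix s t :: 'a assume st: "s < t"
    have t: "bot < t" using st bot.extremum_strict bot.not_eq_extremum by fastforce
    show "HS_less (I_S s) (I_S t)"
    proof (cases "bot < s")
      case False
      then have "I_S s = (\<lambda>_. 0)" by (simp add: I_S_def)
      then show ?thesis using I_pos[OF t] by simp
    next
      case True
      have wl: "GS_le (W_S s) (W_S t)" using WS_less[OF st] by (simp add: GS_le_def hahn_le_def)
      have ne: "W_S s \<noteq> W_S t" using WS_less[OF st] by (simp add: hahn_less_def)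
      show ?thesis
        unfolding HS_less_def hahn_less_def
      proof (intro conjI exI[of _ "W_S t"])
        show "I_S s (W_S t) \<noteq> I_S t (W_S t)" "I_S s (W_S t) < I_S t (W_S t)"
          using True t ne by (auto simp: I_S_def unit_at_def)
        then show "I_S s \<noteq> I_S t" by auto
        show "\<forall>x. I_S s x \<noteq> I_S t x \<longrightarrow> GS_le x (W_S t)"
          using True t wl by (auto simp: I_S_def unit_at_def GS_le_def hahn_le_def)
      qed
    qed
  qed
next
  show "(\<lambda>_. 0) \<in> range (I_S :: 'a \<Rightarrow> _)"
    by (rule range_eqI[of _ _ bot]) (simp add: I_S_def)
next
  show "\<forall>f\<in>(HS :: (('a \<Rightarrow> real) \<Rightarrow> real) set). HS_less (\<lambda>_. 0) f \<longrightarrow>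
         (\<exists>s\<in>(Sstar :: 'a set). HS_less (\<lambda>_. 0) (I_S s) \<and> HS_less (I_S s) f)"
  proof (intro ballI impI)
    fix f :: "('a \<Rightarrow> real) \<Rightarrow> real"
    assume fH: "f \<in> HS" and fp: "HS_less (\<lambda>_. 0) f"
    obtain th where th: "f th \<noteq> 0" "\<forall>x. 0 \<noteq> f x \<longrightarrow> GS_le x th" "0 < f th"
      using fp unfolding HS_less_def hahn_less_def by auto
    have thG: "th \<in> GS" using fH th(1) by (auto simp: HS_def hahn_def)
    obtain s where s: "s \<in> Sstar" "hahn_less op_le (W_S s) th" using below_GS[OF assms thG] by blast
    have sb: "bot < s" using s by (simp add: Sstar_def)
    have ne: "W_S s \<noteq> th" using s(2) by (simp add: hahn_less_def)
    have le: "GS_le (W_S s) th" using s(2) by (simp add: GS_le_def hahn_le_def)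
    have "HS_less (I_S s) f"
      unfolding HS_less_def hahn_less_def
    proof (intro conjI exI[of _ th])
      show "I_S s th \<noteq> f th" "I_S s th < f th" using sb ne th by (auto simp: I_S_def unit_at_def)
      then show "I_S s \<noteq> f" by auto
      show "\<forall>x. I_S s x \<noteq> f x \<longrightarrow> GS_le x th"
        using sb le th(2) by (auto simp: I_S_def unit_at_def)
    qed
    then show "\<exists>s\<in>(Sstar :: 'a set). HS_less (\<lambda>_. 0) (I_S s) \<and> HS_less (I_S s) f"
      using s(1) I_pos[OF sb] by blast
  qed
qed

end
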